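(* Let $V$ be a ground model, $\kappa$ an infinite cardinal, $\mathbb{A}\in V$ a Boolean algebra, and let $\dot{\mathcal{U}}_n$ ($n\in\omega$) and $\dot{\mathcal{U}}$ be $\mathbb{M}_\kappa$-names with $\Vdash_{\mathbb{M}_\kappa}$ "$\dot{\mathcal{U}}_n$ and $\dot{\mathcal{U}}$ are ultrafilters on $\mathbb{A}$". Let $\varphi_n=\varphi_{\dot{\mathcal{U}}_n}$ and $\varphi=\varphi_{\dot{\mathcal{U}}}$. Then $\Vdash_{\mathbb{M}_\kappa}$ "$(\dot{\mathcal{U}}_n)$ converges to $\dot{\mathcal{U}}$ in $St(\mathbb{A})$" if and only if $(\varphi_n)$ converges pointwise algebraically to $\varphi$.
   Context: $\mathbb{M}_\kappa$ is the measure algebra $Bor(2^\kappa)/\mathcal{N}_\kappa$ of the standard product measure on $2^\kappa$, used as a forcing notion. For an $\mathbb{M}_\kappa$-name $\dot{\mathcal{U}}$ for an ultrafilter on $\mathbb{A}$, $\varphi_{\dot{\mathcal{U}}}\colon\mathbb{A}\to\mathbb{M}_\kappa$ is the homomorphism (in $V$) given by $\varphi_{\dot{\mathcal{U}}}(A)=\llbracket A\in\dot{\mathcal{U}}\rrbracket$ (Boolean value). $St(\mathbb{A})$ in the extension is the space of ultrafilters on $\mathbb{A}$ with the Stone topology. $(\varphi_n)$ converges pointwise algebraically to $\varphi$ if for every $A\in\mathbb{A}$, $\bigvee_n\bigwedge_{m>n}\varphi_m(A)=\bigwedge_n\bigvee_{m>n}\varphi_m(A)=\varphi(A)$. *)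

theory Defs
  imports "HOL-Probability.Probability" "HOL-Library.Infinite_Typeclass"
begin

text \<open>The measure algebra M_kappa is represented via the product (fair coin) measure
  on kappa => bool, where the infinite cardinal kappa is the cardinality of an infinite type 'k.
  Conditions are measurable sets of positive measure; q extends p iff q - p is null.\<close>

definition Mk :: "('k::infinite \<Rightarrow> bool) measure" where
  "Mk = PiM UNIV (\<lambda>_. measure_pmf (bernoulli_pmf (1/2)))"

text \<open>Equality in the measure algebra (equality modulo null sets).\<close>
definition meq :: "'m measure \<Rightarrow> 'm set \<Rightarrow> 'm set \<Rightarrow> bool" where
  "meq M X Y \<longleftrightarrow> X - Y \<in> null_sets M \<and> Y - X \<in> null_sets M"

text \<open>Mem a i stands for
  "check(a) is an element of the name with index i"; AllA quantifies over the ground Boolean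
  algebra, AllN over omega; Tru b is a ground (absolute) sentence with truth value b.\<close>
datatype ('a, 'i) fml =
    Mem 'a 'i
  | Tru bool
  | Neg "('a, 'i) fml"
  | Conj "('a, 'i) fml" "('a, 'i) fml"
  | AllA "'a \<Rightarrow> ('a, 'i) fml"
  | AllN "nat \<Rightarrow> ('a, 'i) fml"

definition Disj where "Disj f g = Neg (Conj (Neg f) (Neg g))"
definition Imp where "Imp f g = Neg (Conj f (Neg g))"
definition ExN where "ExN F = Neg (AllN (\<lambda>n. Neg (F n)))"

text \<open>A name for a subset of the ground algebra is represented by the Boolean values of
  membership of the check names: N i a is a (representative of) the Boolean value
  [[ check a \<in> name i ]].\<close>
primrec forces :: "'m measure \<Rightarrow> ('i \<Rightarrow> 'a \<Rightarrow> 'm set) \<Rightarrow> ('a, 'i) fml \<Rightarrow> 'm set \<Rightarrow> bool" where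
  "forces M N (Mem a i) p = (p - N i a \<in> null_sets M)"
| "forces M N (Tru b) p = b"
| "forces M N (Neg f) p =
     (\<forall>q\<in>sets M. q \<notin> null_sets M \<longrightarrow> q - p \<in> null_sets M \<longrightarrow> \<not> forces M N f q)"
| "forces M N (Conj f g) p = (forces M N f p \<and> forces M N g p)"
| "forces M N (AllA F) p = (\<forall>a. forces M N (F a) p)"
| "forces M N (AllN F) p = (\<forall>n. forces M N (F n) p)"

definition forces_all :: "'m measure \<Rightarrow> ('i \<Rightarrow> 'a \<Rightarrow> 'm set) \<Rightarrow> ('a, 'i) fml \<Rightarrow> bool" where
  "forces_all M N f \<longleftrightarrow> (\<forall>p\<in>sets M. p \<notin> null_sets M \<longrightarrow> forces M N f p)"

definition uf_fml :: "'i \<Rightarrow> ('a::boolean_algebra, 'i) fml" where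
  "uf_fml i =
     Conj (AllA (\<lambda>a. AllA (\<lambda>b. Imp (Conj (Mem a i) (Mem b i)) (Mem (inf a b) i))))
    (Conj (AllA (\<lambda>a. AllA (\<lambda>b. Imp (Conj (Mem a i) (Tru (a \<le> b))) (Mem b i))))
    (Conj (Mem top i)
    (Conj (Neg (Mem bot i))
          (AllA (\<lambda>a. Disj (Mem a i) (Mem (- a) i))))))"

definition nm :: "(nat \<Rightarrow> 'a \<Rightarrow> 'm set) \<Rightarrow> ('a \<Rightarrow> 'm set) \<Rightarrow> nat option \<Rightarrow> 'a \<Rightarrow> 'm set" where
  "nm Us U i = (case i of None \<Rightarrow> U | Some n \<Rightarrow> Us n)"

text \<open>"(U_n) converges to U in St(A)": every basic clopen [a] containing U
  eventually contains U_n.\<close>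
definition conv_fml :: "('a, nat option) fml" where
  "conv_fml = AllA (\<lambda>a. Imp (Mem a None)
       (ExN (\<lambda>n. AllN (\<lambda>m. Imp (Tru (n \<le> m)) (Mem a (Some m))))))"

end

theory Submission
  imports Defs
begin

declare null_sets.empty_sets[simp]

lemma null_Diff: "A \<subseteq> B \<Longrightarrow> A - B \<in> null_sets M"
proof -
  assume "A \<subseteq> B"
  then have "A - B = {}" by blast
  then show ?thesis using null_sets.empty_sets[of M] by metis
qed

definition val :: "'m measure \<Rightarrow> ('i \<Rightarrow> 'a \<Rightarrow> 'm set) \<Rightarrow> ('a, 'i) fml \<Rightarrow> 'm set \<Rightarrow> bool" where
  "val M N f B \<longleftrightarrow> B \<in> sets M \<and>
     (\<forall>p\<in>sets M. p \<notin> null_sets M \<longrightarrow> (forces M N f p \<longleftrightarrow> p - B \<in> null_sets M))"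

lemma val_Mem: "N i a \<in> sets M \<Longrightarrow> val M N (Mem a i) (N i a)"
  unfolding val_def forces.simps by blast

lemma val_Tru: "val M N (Tru b) (if b then space M else {})"
proof (cases b)
  case True
  have "\<And>p. p \<in> sets M \<Longrightarrow> p - space M \<in> null_sets M"
    by (rule null_Diff, erule sets.sets_into_space)
  then show ?thesis using True unfolding val_def forces.simps by simp
next
  case False
  then show ?thesis unfolding val_def forces.simps by simp
qed

lemma val_Neg:
  assumes "val M N f B" shows "val M N (Neg f) (space M - B)"
  unfolding val_def
proof (intro conjI ballI impI)
  have B: "B \<in> sets M" and H: "\<And>p. p \<in> sets M \<Longrightarrow> p \<notin> null_sets M \<Longrightarrow> forces M N f p \<longleftrightarrow> p - B \<in> null_sets M"
    using assms by (auto simp: val_def)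
  show "space M - B \<in> sets M" using B by auto
  fix p assume p: "p \<in> sets M" "p \<notin> null_sets M"
  have "p \<subseteq> space M" using p(1) by (rule sets.sets_into_space)
  then have eq: "p - (space M - B) = p \<inter> B" by blast
  show "forces M N (Neg f) p \<longleftrightarrow> p - (space M - B) \<in> null_sets M"
  proof
    assume F: "forces M N (Neg f) p"
    show "p - (space M - B) \<in> null_sets M"
    proof (rule ccontr)
      assume nn: "p - (space M - B) \<notin> null_sets M"
      have q: "p \<inter> B \<in> sets M" using p B by auto
      have e1: "p \<inter> B - p \<in> null_sets M" by (rule null_Diff) blast
      have e2: "p \<inter> B - B \<in> null_sets M" by (rule null_Diff) blast
      have nq: "p \<inter> B \<notin> null_sets M" using nn eq by simp
      have f1: "forces M N f (p \<inter> B)" using H[OF q nq] e2 by blast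
      have "\<not> forces M N f (p \<inter> B)" using F q nq e1 by simp
      then show False using f1 by blast
    qed
  next
    assume nl: "p - (space M - B) \<in> null_sets M"
    show "forces M N (Neg f) p"
    proof (simp only: forces.simps, intro ballI impI notI)
      fix q assume q: "q \<in> sets M" "q \<notin> null_sets M" "q - p \<in> null_sets M" "forces M N f q"
      have "q - B \<in> null_sets M" using H q by auto
      have sub: "q \<subseteq> (q - p) \<union> (p \<inter> B) \<union> (q - B)" by blast
      have pB: "p \<inter> B \<in> null_sets M" using nl eq by simp
      have "(q - p) \<union> (p \<inter> B) \<union> (q - B) \<in> null_sets M"
        by (intro null_sets.Un pB q(3) \<open>q - B \<in> null_sets M\<close>)
      with sub have "q \<in> null_sets M" using q null_sets_subset by blast
      then show False using q by simp
    qed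
  qed
qed

lemma val_Conj:
  assumes "val M N f B" "val M N g C" shows "val M N (Conj f g) (B \<inter> C)"
proof -
  have "\<And>p. p - (B \<inter> C) = (p - B) \<union> (p - C)" by blast
  moreover have "\<And>p. p \<in> sets M \<Longrightarrow> (p - B) \<union> (p - C) \<in> null_sets M \<longleftrightarrow> p - B \<in> null_sets M \<and> p - C \<in> null_sets M"
    using assms unfolding val_def
    by (metis Diff_subset Un_upper1 Un_upper2 null_sets.Un null_sets_subset sets.Diff subset_trans)
  ultimately show ?thesis using assms unfolding val_def by auto
qed

lemma val_AllN:
  assumes "\<And>n. val M N (F n) (B n)" shows "val M N (AllN F) (\<Inter>n. B n)"
proof -
  have Bs: "\<And>n. B n \<in> sets M" using assms by (auto simp: val_def)
  have "\<And>p. p - (\<Inter>n. B n) = (\<Union>n. p - B n)" by blast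
  moreover have "\<And>p. p \<in> sets M \<Longrightarrow> (\<Union>n. p - B n) \<in> null_sets M \<longleftrightarrow> (\<forall>n. p - B n \<in> null_sets M)"
  proof -
    fix p assume p: "p \<in> sets M"
    show "(\<Union>n. p - B n) \<in> null_sets M \<longleftrightarrow> (\<forall>n. p - B n \<in> null_sets M)"
    proof
      assume "(\<Union>n. p - B n) \<in> null_sets M"
      then show "\<forall>n. p - B n \<in> null_sets M"
        using p Bs by (meson UN_upper UNIV_I null_sets_subset sets.Diff)
    next
      assume "\<forall>n. p - B n \<in> null_sets M"
      then show "(\<Union>n. p - B n) \<in> null_sets M" by (intro null_sets_UN) blast
    qed
  qed
  moreover have "(\<Inter>n. B n) \<in> sets M" using Bs by auto
  ultimately show ?thesis using assms unfolding val_def by auto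
qed

lemma val_Imp: "val M N f B \<Longrightarrow> val M N g C \<Longrightarrow> val M N (Imp f g) (space M - (B \<inter> (space M - C)))"
  unfolding Imp_def by (intro val_Neg val_Conj)

lemma val_Disj: "val M N f B \<Longrightarrow> val M N g C \<Longrightarrow> val M N (Disj f g) (space M - ((space M - B) \<inter> (space M - C)))"
  unfolding Disj_def by (intro val_Neg val_Conj)

lemma val_ExN: "(\<And>n. val M N (F n) (B n)) \<Longrightarrow> val M N (ExN F) (space M - (\<Inter>n. space M - B n))"
  unfolding ExN_def by (intro val_Neg val_AllN)

lemma forces_all_val:
  assumes "val M N f B" "space M \<notin> null_sets M"
  shows "forces_all M N f \<longleftrightarrow> (AE x in M. x \<in> B)"
proof -
  have B: "B \<in> sets M" using assms by (simp add: val_def)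
  have e: "{x \<in> space M. x \<notin> B} = space M - B" by blast
  have "forces_all M N f \<longleftrightarrow> space M - B \<in> null_sets M"
  proof
    assume "forces_all M N f"
    then show "space M - B \<in> null_sets M" using assms unfolding forces_all_def val_def by auto
  next
    assume n: "space M - B \<in> null_sets M"
    show "forces_all M N f" unfolding forces_all_def
    proof (intro ballI impI)
      fix p assume p: "p \<in> sets M" "p \<notin> null_sets M"
      have "p \<subseteq> space M" using p(1) by (rule sets.sets_into_space)
      then have "p - B \<subseteq> space M - B" by blast
      then have "p - B \<in> null_sets M" using n p B null_sets_subset by blast
      then show "forces M N f p" using assms p unfolding val_def by auto
    qed
  qed
  also have "\<dots> \<longleftrightarrow> (AE x in M. x \<in> B)"
    using AE_iff_null[of M "\<lambda>x. x \<in> B"] B e by auto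
  finally show ?thesis .
qed

lemma forces_all_Conj: "forces_all M N (Conj f g) \<longleftrightarrow> forces_all M N f \<and> forces_all M N g"
  unfolding forces_all_def by auto

lemma forces_all_AllA: "forces_all M N (AllA F) \<longleftrightarrow> (\<forall>a. forces_all M N (F a))"
  unfolding forces_all_def by auto

lemma Mk_prob: "prob_space (Mk :: ('k::infinite \<Rightarrow> bool) measure)"
  unfolding Mk_def by (intro prob_space_PiM prob_space_measure_pmf)

lemma Mk_space_nonnull: "space (Mk :: ('k::infinite \<Rightarrow> bool) measure) \<notin> null_sets Mk"
  using prob_space.emeasure_space_1[OF Mk_prob] by (metis null_setsD1 zero_neq_one)


lemma meq_AE:
  assumes X: "X \<in> sets M" and Y: "Y \<in> sets M"
  shows "meq M X Y \<longleftrightarrow> (AE x in M. x \<in> X \<longleftrightarrow> x \<in> Y)"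
proof -
  have sX: "X \<subseteq> space M" using X by (rule sets.sets_into_space)
  have sY: "Y \<subseteq> space M" using Y by (rule sets.sets_into_space)
  have e1: "{x \<in> space M. \<not> (x \<in> X \<longrightarrow> x \<in> Y)} = X - Y" using sX by blast
  have e2: "{x \<in> space M. \<not> (x \<in> Y \<longrightarrow> x \<in> X)} = Y - X" using sY by blast
  have m1: "{x \<in> space M. \<not> (x \<in> X \<longrightarrow> x \<in> Y)} \<in> sets M" unfolding e1 using X Y by (rule sets.Diff)
  have m2: "{x \<in> space M. \<not> (x \<in> Y \<longrightarrow> x \<in> X)} \<in> sets M" unfolding e2 using Y X by (rule sets.Diff)
  have a1: "(AE x in M. x \<in> X \<longrightarrow> x \<in> Y) \<longleftrightarrow> X - Y \<in> null_sets M"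
    using AE_iff_null[OF m1] unfolding e1 .
  have a2: "(AE x in M. x \<in> Y \<longrightarrow> x \<in> X) \<longleftrightarrow> Y - X \<in> null_sets M"
    using AE_iff_null[OF m2] unfolding e2 .
  have "(AE x in M. x \<in> X \<longleftrightarrow> x \<in> Y) \<longleftrightarrow>
        (AE x in M. (x \<in> X \<longrightarrow> x \<in> Y) \<and> (x \<in> Y \<longrightarrow> x \<in> X))"
    by (rule AE_cong) blast
  also have "\<dots> \<longleftrightarrow> (AE x in M. x \<in> X \<longrightarrow> x \<in> Y) \<and> (AE x in M. x \<in> Y \<longrightarrow> x \<in> X)"
    by (rule AE_conj_iff)
  finally show ?thesis using a1 a2 unfolding meq_def by (simp only:)
qed

lemma uf_AE:
  assumes meas: "\<And>i a. N i a \<in> sets M" and sp: "space M \<notin> null_sets M"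
    and F: "forces_all M N (uf_fml i)"
  shows "AE x in M. x \<in> N i a \<and> x \<in> N i b \<longrightarrow> x \<in> N i (inf a b)"
    and "AE x in M. x \<notin> N i bot"
    and "AE x in M. x \<in> N i a \<or> x \<in> N i (- a)"
proof -
  have vm: "\<And>a. val M N (Mem a i) (N i a)" by (rule val_Mem, rule meas)
  have F1: "forces_all M N (Imp (Conj (Mem a i) (Mem b i)) (Mem (inf a b) i))"
    using F unfolding uf_fml_def forces_all_Conj forces_all_AllA by (simp only:)
  have F2: "forces_all M N (Neg (Mem bot i))"
    using F unfolding uf_fml_def forces_all_Conj forces_all_AllA by (simp only:)
  have F3: "forces_all M N (Disj (Mem a i) (Mem (- a) i))"
    using F unfolding uf_fml_def forces_all_Conj forces_all_AllA by (simp only:)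
  have "AE x in M. x \<in> space M - ((N i a \<inter> N i b) \<inter> (space M - N i (inf a b)))"
    using F1 forces_all_val[OF val_Imp[OF val_Conj[OF vm[of a] vm[of b]] vm[of "inf a b"]] sp]
    by (simp only:)
  then show "AE x in M. x \<in> N i a \<and> x \<in> N i b \<longrightarrow> x \<in> N i (inf a b)"
    by (rule eventually_mono) blast
  have "AE x in M. x \<in> space M - N i bot"
    using F2 forces_all_val[OF val_Neg[OF vm[of bot]] sp] by (simp only:)
  then show "AE x in M. x \<notin> N i bot"
    by (rule eventually_mono) blast
  have "AE x in M. x \<in> space M - ((space M - N i a) \<inter> (space M - N i (- a)))"
    using F3 forces_all_val[OF val_Disj[OF vm[of a] vm[of "- a"]] sp] by (simp only:)
  then show "AE x in M. x \<in> N i a \<or> x \<in> N i (- a)"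
    by (rule eventually_mono) blast
qed

lemma conv_AE:
  fixes Us :: "nat \<Rightarrow> 'a \<Rightarrow> 'm set"
  assumes meas: "\<And>i a. nm Us U i a \<in> sets M" and sp: "space M \<notin> null_sets M"
  shows "forces_all M (nm Us U) conv_fml \<longleftrightarrow>
     (\<forall>a. AE x in M. x \<in> U a \<longrightarrow> (\<exists>n. \<forall>m. n \<le> m \<longrightarrow> x \<in> Us m a))"
proof -
  have "forces_all M (nm Us U) conv_fml \<longleftrightarrow>
     (\<forall>a. forces_all M (nm Us U) (Imp (Mem a None)
       (ExN (\<lambda>n. AllN (\<lambda>m. Imp (Tru (n \<le> m)) (Mem a (Some m)))))))"
    unfolding conv_fml_def forces_all_AllA ..
  also have "\<dots> \<longleftrightarrow> (\<forall>a. AE x in M. x \<in> space M - (nm Us U None a \<inter> (space M - (space M -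
      (\<Inter>n. space M - (\<Inter>m. space M - ((if n \<le> m then space M else {}) \<inter> (space M - nm Us U (Some m) a))))))))"
    by (intro all_cong1 forces_all_val[OF _ sp] val_Imp val_Mem val_ExN val_AllN val_Tru meas)
  also have "\<dots> \<longleftrightarrow> (\<forall>a. AE x in M. x \<in> U a \<longrightarrow> (\<exists>n. \<forall>m. n \<le> m \<longrightarrow> x \<in> Us m a))"
    by (intro all_cong1 AE_cong) (auto simp: nm_def)
  finally show ?thesis .
qed

lemma pointwise:
  fixes P Q :: "nat \<Rightarrow> bool"
  assumes "u \<longrightarrow> (\<exists>n. \<forall>m. n \<le> m \<longrightarrow> P m)" "v \<longrightarrow> (\<exists>n. \<forall>m. n \<le> m \<longrightarrow> Q m)" "u \<or> v"
    "\<forall>m. \<not> (P m \<and> Q m)"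
  shows "((\<exists>n. \<forall>m\<in>{n<..}. P m) \<longleftrightarrow> u) \<and> ((\<forall>n. \<exists>m\<in>{n<..}. P m) \<longleftrightarrow> u)"
proof (cases u)
  case True
  then obtain n0 where n0: "\<forall>m. n0 \<le> m \<longrightarrow> P m" using assms by blast
  have "\<exists>n. \<forall>m\<in>{n<..}. P m" using n0 by (intro exI[of _ n0]) auto
  moreover have "\<forall>n. \<exists>m\<in>{n<..}. P m"
  proof
    fix n show "\<exists>m\<in>{n<..}. P m" using n0 by (intro bexI[of _ "max n0 (Suc n)"]) auto
  qed
  ultimately show ?thesis using True by blast
next
  case False
  then have "v" using assms by blast
  then obtain n0 where n0: "\<forall>m. n0 \<le> m \<longrightarrow> Q m" using assms by blast
  then have np: "\<forall>m. n0 \<le> m \<longrightarrow> \<not> P m" using assms(4) by blast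
  have "\<not> (\<forall>n. \<exists>m\<in>{n<..}. P m)"
  proof
    assume "\<forall>n. \<exists>m\<in>{n<..}. P m"
    then obtain m where "m \<in> {n0<..}" "P m" by blast
    then show False using np by auto
  qed
  moreover have "\<not> (\<exists>n. \<forall>m\<in>{n<..}. P m)"
  proof
    assume "\<exists>n. \<forall>m\<in>{n<..}. P m"
    then obtain n where "\<forall>m\<in>{n<..}. P m" by blast
    then have "P (max n0 (Suc n))" by auto
    then show False using np by auto
  qed
  ultimately show ?thesis using False by blast
qed

theorem proposition7p3:
  fixes Us :: "nat \<Rightarrow> 'a::boolean_algebra \<Rightarrow> ('k::infinite \<Rightarrow> bool) set"
    and U :: "'a \<Rightarrow> ('k \<Rightarrow> bool) set"
  assumes "\<And>n a. Us n a \<in> sets Mk"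
    and "\<And>a. U a \<in> sets Mk"
    and "\<And>n. forces_all Mk (nm Us U) (uf_fml (Some n))"
    and "forces_all Mk (nm Us U) (uf_fml None)"
  shows "forces_all Mk (nm Us U) conv_fml \<longleftrightarrow>
    (\<forall>a. meq Mk (\<Union>n. \<Inter>m\<in>{n<..}. Us m a) (U a) \<and>
         meq Mk (\<Inter>n. \<Union>m\<in>{n<..}. Us m a) (U a))"
proof -
  have sp: "space (Mk :: ('k \<Rightarrow> bool) measure) \<notin> null_sets Mk" by (rule Mk_space_nonnull)
  have meas: "\<And>i a. nm Us U i a \<in> sets Mk"
    using assms(1,2) by (auto simp: nm_def split: option.splits)
  have L: "(\<Union>n. \<Inter>m\<in>{n<..}. Us m a) \<in> sets Mk" for a
    using assms(1) by (intro sets.countable_UN sets.countable_INT) auto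
  have S: "(\<Inter>n. \<Union>m\<in>{n<..}. Us m a) \<in> sets Mk" for a
    using assms(1) by (intro sets.countable_UN sets.countable_INT) auto
  have conv: "forces_all Mk (nm Us U) conv_fml \<longleftrightarrow>
     (\<forall>a. AE x in Mk. x \<in> U a \<longrightarrow> (\<exists>n. \<forall>m. n \<le> m \<longrightarrow> x \<in> Us m a))"
    by (rule conv_AE[OF meas sp])
  have rhs: "(\<forall>a. meq Mk (\<Union>n. \<Inter>m\<in>{n<..}. Us m a) (U a) \<and>
         meq Mk (\<Inter>n. \<Union>m\<in>{n<..}. Us m a) (U a)) \<longleftrightarrow>
     (\<forall>a. (AE x in Mk. x \<in> (\<Union>n. \<Inter>m\<in>{n<..}. Us m a) \<longleftrightarrow> x \<in> U a) \<and>
         (AE x in Mk. x \<in> (\<Inter>n. \<Union>m\<in>{n<..}. Us m a) \<longleftrightarrow> x \<in> U a))"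
    using meq_AE[OF L assms(2)] meq_AE[OF S assms(2)] by blast
  show ?thesis
  proof
    assume c: "forces_all Mk (nm Us U) conv_fml"
    show "\<forall>a. meq Mk (\<Union>n. \<Inter>m\<in>{n<..}. Us m a) (U a) \<and>
         meq Mk (\<Inter>n. \<Union>m\<in>{n<..}. Us m a) (U a)"
      unfolding rhs
    proof
      fix a
      have C1: "AE x in Mk. x \<in> U a \<longrightarrow> (\<exists>n. \<forall>m. n \<le> m \<longrightarrow> x \<in> Us m a)"
        using c conv by blast
      have C2: "AE x in Mk. x \<in> U (- a) \<longrightarrow> (\<exists>n. \<forall>m. n \<le> m \<longrightarrow> x \<in> Us m (- a))"
        using c conv by blast
      have D: "AE x in Mk. x \<in> U a \<or> x \<in> U (- a)"
        using uf_AE(3)[OF meas sp assms(4), of a] by (simp add: nm_def)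
      have E1: "AE x in Mk. \<forall>m. x \<in> Us m a \<and> x \<in> Us m (- a) \<longrightarrow> x \<in> Us m bot"
        using uf_AE(1)[OF meas sp assms(3), of _ a "- a"] by (simp add: nm_def AE_all_countable)
      have E2: "AE x in Mk. \<forall>m. x \<notin> Us m bot"
        using uf_AE(2)[OF meas sp assms(3)] by (simp add: nm_def AE_all_countable)
      have "AE x in Mk. (x \<in> (\<Union>n. \<Inter>m\<in>{n<..}. Us m a) \<longleftrightarrow> x \<in> U a) \<and>
         (x \<in> (\<Inter>n. \<Union>m\<in>{n<..}. Us m a) \<longleftrightarrow> x \<in> U a)"
        using C1 C2 D E1 E2
      proof eventually_elim
        case (elim x)
        have dis: "\<forall>m. \<not> (x \<in> Us m a \<and> x \<in> Us m (- a))" using elim(4,5) by simp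
        show ?case using pointwise[OF elim(1,2,3) dis] by simp
      qed
      then show "(AE x in Mk. x \<in> (\<Union>n. \<Inter>m\<in>{n<..}. Us m a) \<longleftrightarrow> x \<in> U a) \<and>
         (AE x in Mk. x \<in> (\<Inter>n. \<Union>m\<in>{n<..}. Us m a) \<longleftrightarrow> x \<in> U a)"
        by (simp add: AE_conj_iff)
    qed
  next
    assume r: "\<forall>a. meq Mk (\<Union>n. \<Inter>m\<in>{n<..}. Us m a) (U a) \<and>
         meq Mk (\<Inter>n. \<Union>m\<in>{n<..}. Us m a) (U a)"
    show "forces_all Mk (nm Us U) conv_fml"
      unfolding conv
    proof
      fix a
      have "AE x in Mk. x \<in> (\<Union>n. \<Inter>m\<in>{n<..}. Us m a) \<longleftrightarrow> x \<in> U a"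
        using r rhs by blast
      then show "AE x in Mk. x \<in> U a \<longrightarrow> (\<exists>n. \<forall>m. n \<le> m \<longrightarrow> x \<in> Us m a)"
      proof (rule eventually_mono)
        fix x assume "x \<in> (\<Union>n. \<Inter>m\<in>{n<..}. Us m a) \<longleftrightarrow> x \<in> U a"
        show "x \<in> U a \<longrightarrow> (\<exists>n. \<forall>m. n \<le> m \<longrightarrow> x \<in> Us m a)"
        proof
          assume "x \<in> U a"
          with \<open>x \<in> (\<Union>n. \<Inter>m\<in>{n<..}. Us m a) \<longleftrightarrow> x \<in> U a\<close>
          obtain n where n: "\<forall>m\<in>{n<..}. x \<in> Us m a" by blast
          show "\<exists>n. \<forall>m. n \<le> m \<longrightarrow> x \<in> Us m a"
            using n by (intro exI[of _ "Suc n"]) auto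
        qed
      qed
    qed
  qed
qed

end
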